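(* Let $\Sigma$ be a finite set, $I\subseteq\Sigma\times\Sigma$ a symmetric irreflexive relation, and $M=M(\Sigma,I)$ the free partially commutative monoid. Let $\Sigma_0\subseteq\Sigma$, $I_0=(\Sigma_0\times\Sigma_0)\cap I$ and $M_0=M(\Sigma_0,I_0)$, regarded as a submonoid of $M$ via the canonical map. Then the monoid ring $\mathbb{Z}M$ is a free left $\mathbb{Z}M_0$-module.
   Context: For a finite alphabet $\Sigma$ and a symmetric irreflexive relation $I\subseteq \Sigma\times\Sigma$ (the commutation relation), the free partially commutative monoid $M(\Sigma,I)$ is the monoid with presentation $\langle \Sigma \mid ab=ba \text{ for all } (a,b)\in I\rangle$. The canonical map $M(\Sigma_0,I_0)\to M(\Sigma,I)$ sends the class of a word over $\Sigma_0$ to its class in $M(\Sigma,I)$; $\mathbb{Z}M_0$ acts on $\mathbb{Z}M$ by left multiplication. *)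

theory Defs
  imports Main
begin

definition swap_step :: "('a \<times> 'a) set \<Rightarrow> 'a list \<Rightarrow> 'a list \<Rightarrow> bool" where
  "swap_step I u v \<longleftrightarrow> (\<exists>x y a b. (a, b) \<in> I \<and> u = x @ [a, b] @ y \<and> v = x @ [b, a] @ y)"

definition trace_eq :: "('a \<times> 'a) set \<Rightarrow> 'a list \<Rightarrow> 'a list \<Rightarrow> bool" where
  "trace_eq I = (swap_step I)\<^sup>*\<^sup>*"

definition tclass :: "('a \<times> 'a) set \<Rightarrow> 'a list \<Rightarrow> 'a list set" where
  "tclass I w = {v. trace_eq I w v}"

(* the carrier of the free partially commutative monoid M(Sigma, I) *)
definition pcm :: "'a set \<Rightarrow> ('a \<times> 'a) set \<Rightarrow> 'a list set set" where
  "pcm \<Sigma> I = tclass I ` lists \<Sigma>"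

definition rep :: "'a list set \<Rightarrow> 'a list" where
  "rep m = (SOME w. w \<in> m)"

definition pcm_mult :: "('a \<times> 'a) set \<Rightarrow> 'a list set \<Rightarrow> 'a list set \<Rightarrow> 'a list set" where
  "pcm_mult I m1 m2 = tclass I (rep m1 @ rep m2)"

(* the monoid ring Z M(Sigma, I): finitely supported integer functions on M *)
definition mring :: "'a set \<Rightarrow> ('a \<times> 'a) set \<Rightarrow> ('a list set \<Rightarrow> int) set" where
  "mring \<Sigma> I = {f. finite {m. f m \<noteq> 0} \<and> {m. f m \<noteq> 0} \<subseteq> pcm \<Sigma> I}"

definition mr_mult :: "('a \<times> 'a) set \<Rightarrow> ('a list set \<Rightarrow> int) \<Rightarrow> ('a list set \<Rightarrow> int) \<Rightarrow> ('a list set \<Rightarrow> int)" where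
  "mr_mult I f g = (\<lambda>m. \<Sum>(m1, m2) \<in> {(m1, m2). f m1 \<noteq> 0 \<and> g m2 \<noteq> 0 \<and> pcm_mult I m1 m2 = m}.
                          f m1 * g m2)"

(* ring map Z M(Sigma0, I0) -> Z M(Sigma, I) induced by the canonical map [w]_{I0} |-> [w]_I *)
definition mr_map :: "('a \<times> 'a) set \<Rightarrow> ('a list set \<Rightarrow> int) \<Rightarrow> ('a list set \<Rightarrow> int)" where
  "mr_map I r = (\<lambda>m. \<Sum>m0 \<in> {m0. r m0 \<noteq> 0 \<and> tclass I (rep m0) = m}. r m0)"

definition sub_act :: "('a \<times> 'a) set \<Rightarrow> ('a list set \<Rightarrow> int) \<Rightarrow> ('a list set \<Rightarrow> int) \<Rightarrow> ('a list set \<Rightarrow> int)" where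
  "sub_act I r x = mr_mult I (mr_map I r) x"

definition free_left_module ::
  "('r \<Rightarrow> 'b::comm_monoid_add) set \<Rightarrow> ('c \<Rightarrow> 'd::comm_monoid_add) set
     \<Rightarrow> (('r \<Rightarrow> 'b) \<Rightarrow> ('c \<Rightarrow> 'd) \<Rightarrow> ('c \<Rightarrow> 'd)) \<Rightarrow> bool" where
  "free_left_module RS MS act \<longleftrightarrow>
     (\<exists>B. B \<subseteq> MS \<and>
        (\<forall>x \<in> MS. \<exists>!c. (\<forall>b. c b \<in> RS) \<and> (\<forall>b. b \<notin> B \<longrightarrow> c b = (\<lambda>_. 0)) \<and>
                        finite {b. c b \<noteq> (\<lambda>_. 0)} \<and>
                        x = (\<lambda>m. \<Sum>b \<in> {b. c b \<noteq> (\<lambda>_. 0)}. act (c b) b m)))"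

end

theory Submission
  imports Defs
begin

lemma swap_step_set: "swap_step I u v \<Longrightarrow> set u = set v"
  by (auto simp: swap_step_def)
lemma trace_eq_set: "trace_eq I u v \<Longrightarrow> set u = set v"
  unfolding trace_eq_def by (induction rule: rtranclp_induct) (auto dest: swap_step_set)
lemma trace_eq_refl[simp]: "trace_eq I u u" by (simp add: trace_eq_def)
lemma trace_eq_trans: "trace_eq I u v \<Longrightarrow> trace_eq I v w \<Longrightarrow> trace_eq I u w"
  unfolding trace_eq_def by (rule rtranclp_trans)
lemma swap_step_sym: "sym I \<Longrightarrow> swap_step I u v \<Longrightarrow> swap_step I v u"
  unfolding swap_step_def sym_def by blast
lemma trace_eq_sym: assumes "sym I" "trace_eq I u v" shows "trace_eq I v u"
  using assms(2) assms(1) unfolding trace_eq_def by (induction rule: rtranclp_induct) (auto intro: converse_rtranclp_into_rtranclp swap_step_sym)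
lemma swap_step_app: "swap_step I u v \<Longrightarrow> swap_step I (x@u@y) (x@v@y)"
  unfolding swap_step_def
  apply clarify
  subgoal for xa ya a b
    by (rule exI[of _ "x@xa"], rule exI[of _ "ya@y"], rule exI[of _ a], rule exI[of _ b]) simp
  done
lemma trace_eq_app: "trace_eq I u v \<Longrightarrow> trace_eq I (x@u@y) (x@v@y)"
  unfolding trace_eq_def by (induction rule: rtranclp_induct) (auto intro: rtranclp.rtrancl_into_rtrancl swap_step_app)
lemma trace_eq_app2: "trace_eq I u u' \<Longrightarrow> trace_eq I v v' \<Longrightarrow> trace_eq I (u@v) (u'@v')"
  using trace_eq_app[of I u u' "[]" v] trace_eq_app[of I v v' u' "[]"] trace_eq_trans by fastforce
lemma swap_step_mono: "I0 \<subseteq> I \<Longrightarrow> swap_step I0 u v \<Longrightarrow> swap_step I u v"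
  unfolding swap_step_def by blast
lemma trace_eq_mono: assumes "I0 \<subseteq> I" "trace_eq I0 u v" shows "trace_eq I u v"
  using assms(2) assms(1) unfolding trace_eq_def by (induction rule: rtranclp_induct) (auto intro: rtranclp.rtrancl_into_rtrancl swap_step_mono)
lemma swap_ab: "(a,b) \<in> K \<Longrightarrow> swap_step K [a,b] [b,a]"
  unfolding swap_step_def by (rule exI[of _ "[]"], rule exI[of _ "[]"]) auto
lemma trace_ab: "(a,b) \<in> K \<Longrightarrow> trace_eq K [a,b] [b,a]"
  unfolding trace_eq_def by (rule r_into_rtranclp, rule swap_ab)

lemma tclass_eq_iff: "sym I \<Longrightarrow> tclass I u = tclass I v \<longleftrightarrow> trace_eq I u v"
  unfolding tclass_def using trace_eq_trans trace_eq_sym trace_eq_refl by blast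
lemma rep_tclass: "trace_eq I u (rep (tclass I u))"
  unfolding rep_def tclass_def by (metis (mono_tags) mem_Collect_eq someI trace_eq_refl)

lemma rep_in: "sym K \<Longrightarrow> m \<in> pcm A K \<Longrightarrow> rep m \<in> lists A \<and> tclass K (rep m) = m"
  unfolding pcm_def using rep_tclass trace_eq_set tclass_eq_iff by fastforce

lemma commute: "(\<forall>d\<in>set z. (d,c)\<in>I) \<Longrightarrow> trace_eq I (z@c#w) (c#z@w)"
proof (induction z)
  case (Cons d z)
  have 1: "trace_eq I (d#z@c#w) (d#c#z@w)" using trace_eq_app[OF Cons.IH, of "[d]" "[]"] Cons.prems by simp
  have "trace_eq I (d#c#z@w) (c#d#z@w)" using trace_eq_app[OF trace_ab, of d c I "[]" "z@w"] Cons.prems by simp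
  then show ?case using 1 trace_eq_trans by fastforce
qed simp

fun sp :: "'a set \<Rightarrow> ('a\<times>'a) set \<Rightarrow> 'a set \<Rightarrow> 'a list \<Rightarrow> 'a list \<times> 'a list" where
  "sp A J S [] = ([], [])"
| "sp A J S (c#w) = (if c \<in> A \<and> (\<forall>d\<in>S. (d,c) \<in> J) then (c # fst (sp A J S w), snd (sp A J S w))
     else (fst (sp A J (insert c S) w), c # snd (sp A J (insert c S) w)))"

lemma sp_set: "set (fst (sp A J S w)) \<subseteq> A \<inter> set w \<and> set (snd (sp A J S w)) \<subseteq> set w"
  by (induction w arbitrary: S) auto

lemma sp_append: "sp A J S (x@y) = (fst (sp A J S x) @ fst (sp A J (S \<union> set (snd (sp A J S x))) y),
   snd (sp A J S x) @ snd (sp A J (S \<union> set (snd (sp A J S x))) y))"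
  by (induction x arbitrary: S) auto

lemma sp_prefix: "set u \<subseteq> A \<Longrightarrow> sp A J {} (u@w) = (u @ fst (sp A J {} w), snd (sp A J {} w))"
  by (induction u) auto

lemma sp_snd: "sp A J S (snd (sp A J S w)) = ([], snd (sp A J S w))"
  by (induction w arbitrary: S) auto

lemma sp_decomp: "set z \<subseteq> S \<Longrightarrow> trace_eq J (z@w) (fst (sp A J S w) @ z @ snd (sp A J S w))"
proof (induction w arbitrary: S z)
  case (Cons c w)
  show ?case
  proof (cases "c \<in> A \<and> (\<forall>d\<in>S. (d,c) \<in> J)")
    case True
    have 1: "trace_eq J (z@c#w) (c#z@w)" using commute[of z c J w] True Cons.prems by auto
    have "trace_eq J (c#z@w) (c#(fst (sp A J S w) @ z @ snd (sp A J S w)))"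
      using trace_eq_app[OF Cons.IH[OF Cons.prems], of "[c]" "[]"] by simp
    then show ?thesis using 1 True trace_eq_trans by fastforce
  next
    case False
    have "trace_eq J ((z@[c])@w) (fst (sp A J (insert c S) w) @ (z@[c]) @ snd (sp A J (insert c S) w))"
      using Cons.IH[of "z@[c]" "insert c S"] Cons.prems by auto
    then show ?thesis using False by auto
  qed
qed simp

lemma sp_swap2: "(a,b)\<in>J \<Longrightarrow> sym J \<Longrightarrow> trace_eq ((A\<times>A)\<inter>J) (fst (sp A J S [a,b])) (fst (sp A J S [b,a]))
  \<and> trace_eq J (snd (sp A J S [a,b])) (snd (sp A J S [b,a]))
  \<and> set (snd (sp A J S [a,b])) = set (snd (sp A J S [b,a]))"
  apply (cases "a \<in> A \<and> (\<forall>d\<in>S. (d,a)\<in>J)"; cases "b \<in> A \<and> (\<forall>d\<in>S. (d,b)\<in>J)")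
  apply (auto intro: trace_ab dest: symD)
  done

lemma sp_step: "sym J \<Longrightarrow> swap_step J w v \<Longrightarrow> trace_eq ((A\<times>A)\<inter>J) (fst (sp A J S w)) (fst (sp A J S v))
  \<and> trace_eq J (snd (sp A J S w)) (snd (sp A J S v))"
proof -
  assume sJ: "sym J" and "swap_step J w v"
  then obtain x y a b where ab: "(a,b)\<in>J" and w: "w = x@[a,b]@y" and v: "v = x@[b,a]@y"
    unfolding swap_step_def by blast
  define S1 where "S1 = S \<union> set (snd (sp A J S x))"
  have e: "set (snd (sp A J S1 [a,b])) = set (snd (sp A J S1 [b,a]))"
    and t1: "trace_eq ((A\<times>A)\<inter>J) (fst (sp A J S1 [a,b])) (fst (sp A J S1 [b,a]))"
    and t2: "trace_eq J (snd (sp A J S1 [a,b])) (snd (sp A J S1 [b,a]))"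
    using sp_swap2[OF ab sJ, of A S1] by auto
  show ?thesis
    unfolding w v sp_append[of A J S x] S1_def[symmetric] sp_append[of A J S1 "[a,b]"] sp_append[of A J S1 "[b,a]"]
    using e trace_eq_app[OF t1] trace_eq_app[OF t2] by (simp del: sp.simps)
qed

lemma sp_trace: assumes "sym J" "trace_eq J w v"
  shows "trace_eq ((A\<times>A)\<inter>J) (fst (sp A J S w)) (fst (sp A J S v)) \<and> trace_eq J (snd (sp A J S w)) (snd (sp A J S v))"
proof -
  have "(swap_step J)\<^sup>*\<^sup>* w v" using assms(2) unfolding trace_eq_def .
  then show ?thesis
  proof (induction rule: rtranclp_induct)
    case (step y z)
    then show ?case using sp_step[OF assms(1) step(2), of A S] trace_eq_trans by blast
  qed simp
qed

theorem lemma2p1: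
  fixes \<Sigma> \<Sigma>0 :: "'a set" and I :: "('a \<times> 'a) set"
  assumes "finite \<Sigma>"
    and "I \<subseteq> \<Sigma> \<times> \<Sigma>"
    and "sym I"
    and "irrefl I"
    and "\<Sigma>0 \<subseteq> \<Sigma>"
  shows "free_left_module (mring \<Sigma>0 ((\<Sigma>0 \<times> \<Sigma>0) \<inter> I)) (mring \<Sigma> I) (sub_act I)"
proof -
  define I0 where "I0 = (\<Sigma>0 \<times> \<Sigma>0) \<inter> I"
  define M where "M = pcm \<Sigma> I"
  define M0 where "M0 = pcm \<Sigma>0 I0"
  define phi where "phi = (\<lambda>m0. tclass I (rep m0))"
  define d0 where "d0 = (\<lambda>m. tclass I0 (fst (sp \<Sigma>0 I {} (rep m))))"
  define d1 where "d1 = (\<lambda>m. tclass I (snd (sp \<Sigma>0 I {} (rep m))))"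
  define T where "T = tclass I ` {q \<in> lists \<Sigma>. fst (sp \<Sigma>0 I {} q) = []}"
  have sI: "sym I" by (rule assms(3))
  have sI0: "sym I0" using assms(3) unfolding I0_def sym_def by auto
  have I0I: "I0 \<subseteq> I" unfolding I0_def by auto
  have TM: "T \<subseteq> M" unfolding T_def M_def pcm_def by auto
  have A: "pcm_mult I (phi m0) t \<in> M \<and> d0 (pcm_mult I (phi m0) t) = m0 \<and> d1 (pcm_mult I (phi m0) t) = t"
    if m0: "m0 \<in> M0" and t: "t \<in> T" for m0 t
  proof -
    define u where "u = rep m0"
    have u: "u \<in> lists \<Sigma>0" "tclass I0 u = m0" using rep_in[OF sI0, of m0 \<Sigma>0] m0 unfolding u_def M0_def by auto
    obtain q where q: "q \<in> lists \<Sigma>" "fst (sp \<Sigma>0 I {} q) = []" "t = tclass I q" using t unfolding T_def by auto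
    define q' where "q' = rep t"
    have qq': "trace_eq I q q'" using rep_tclass q(3) unfolding q'_def by blast
    have "trace_eq I0 (fst (sp \<Sigma>0 I {} q)) (fst (sp \<Sigma>0 I {} q'))"
      using sp_trace[OF sI qq'] unfolding I0_def by blast
    hence f0: "fst (sp \<Sigma>0 I {} q') = []" using q(2) trace_eq_set by fastforce
    have sq': "trace_eq I (snd (sp \<Sigma>0 I {} q')) q'"
      using sp_decomp[of "[]" "{}" I q' \<Sigma>0] f0 trace_eq_sym[OF sI] by auto
    have spu: "sp \<Sigma>0 I {} (u @ q') = (u, snd (sp \<Sigma>0 I {} q'))"
      using sp_prefix[of u \<Sigma>0 I q'] u(1) f0 by auto
    define W where "W = rep (phi m0) @ q'"
    have "trace_eq I u (rep (phi m0))" unfolding phi_def u_def by (rule rep_tclass)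
    hence WW: "trace_eq I W (u @ q')" unfolding W_def
      using trace_eq_app2 trace_eq_sym[OF sI] trace_eq_refl by blast
    have pm: "pcm_mult I (phi m0) t = tclass I W" unfolding pcm_mult_def W_def q'_def by simp
    have "trace_eq I (rep (tclass I W)) (u @ q')"
      using rep_tclass[of I W] WW trace_eq_sym[OF sI] trace_eq_trans by blast
    from sp_trace[OF sI this, of \<Sigma>0 "{}"] spu
    have t1: "trace_eq I0 (fst (sp \<Sigma>0 I {} (rep (tclass I W)))) u"
      and t2: "trace_eq I (snd (sp \<Sigma>0 I {} (rep (tclass I W)))) (snd (sp \<Sigma>0 I {} q'))"
      unfolding I0_def by auto
    have r1: "d0 (pcm_mult I (phi m0) t) = m0" unfolding pm d0_def using t1 u(2) tclass_eq_iff[OF sI0] by blast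
    have tM: "t \<in> M" using t TM by auto
    have "tclass I q' = t" using rep_in[OF sI, of t \<Sigma>] tM unfolding q'_def M_def by auto
    then have r2: "d1 (pcm_mult I (phi m0) t) = t" unfolding pm d1_def
      using t2 sq' trace_eq_trans tclass_eq_iff[OF sI] by metis
    have "set (rep (phi m0)) = set u" using \<open>trace_eq I u (rep (phi m0))\<close> trace_eq_set by metis
    moreover have "set q' = set q" using qq' trace_eq_set by metis
    ultimately have "W \<in> lists \<Sigma>" unfolding W_def using u(1) q(1) assms(5) by auto
    then have "pcm_mult I (phi m0) t \<in> M" unfolding pm M_def pcm_def by auto
    then show ?thesis using r1 r2 by auto
  qed
  have B: "d0 m \<in> M0 \<and> d1 m \<in> T \<and> pcm_mult I (phi (d0 m)) (d1 m) = m" if m: "m \<in> M" for m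
  proof -
    define w where "w = rep m"
    have w: "w \<in> lists \<Sigma>" "tclass I w = m" using rep_in[OF sI, of m \<Sigma>] m unfolding w_def M_def by auto
    define p where "p = fst (sp \<Sigma>0 I {} w)"
    define q where "q = snd (sp \<Sigma>0 I {} w)"
    have p: "p \<in> lists \<Sigma>0" using sp_set[of \<Sigma>0 I "{}" w] unfolding p_def by auto
    have q: "q \<in> lists \<Sigma>" using sp_set[of \<Sigma>0 I "{}" w] w(1) unfolding q_def by auto
    have r1: "d0 m \<in> M0" unfolding d0_def M0_def pcm_def w_def[symmetric] p_def[symmetric] using p by auto
    have "fst (sp \<Sigma>0 I {} q) = []" unfolding q_def using sp_snd by (metis fst_conv)
    then have r2: "d1 m \<in> T" unfolding d1_def T_def w_def[symmetric] q_def[symmetric] using q by auto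
    have pq: "trace_eq I w (p @ q)" using sp_decomp[of "[]" "{}" I w \<Sigma>0] unfolding p_def q_def by simp
    have e1: "trace_eq I p (rep (phi (d0 m)))"
      unfolding phi_def d0_def w_def[symmetric] p_def[symmetric]
      using rep_tclass[of I0 p] trace_eq_mono[OF I0I] rep_tclass[of I "rep (tclass I0 p)"] trace_eq_trans by blast
    have e2: "trace_eq I q (rep (d1 m))"
      unfolding d1_def w_def[symmetric] q_def[symmetric] by (rule rep_tclass)
    have "trace_eq I w (rep (phi (d0 m)) @ rep (d1 m))"
      using pq trace_eq_app2[OF e1 e2] trace_eq_trans by blast
    then have "pcm_mult I (phi (d0 m)) (d1 m) = m" unfolding pcm_mult_def using w(2) tclass_eq_iff[OF sI] by metis
    then show ?thesis using r1 r2 by auto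
  qed

  define dl where "dl = (\<lambda>t::'a list set. \<lambda>m::'a list set. if m = t then (1::int) else 0)"
  have inj_dl: "inj dl"
  proof (rule injI)
    fix s t assume "dl s = dl t"
    then have "dl s t = 1" by (simp add: dl_def)
    then show "s = t" unfolding dl_def by (simp split: if_splits)
  qed
  have teT: "tclass I [] \<in> T" unfolding T_def by (rule imageI) simp
  have inj_phi: "m0 = m0'" if "m0 \<in> M0" "m0' \<in> M0" "phi m0 = phi m0'" for m0 m0'
  proof -
    note h1 = A[OF that(1) teT, THEN conjunct2, THEN conjunct1]
    note h2 = A[OF that(2) teT, THEN conjunct2, THEN conjunct1]
    have "m0 = d0 (pcm_mult I (phi m0) (tclass I []))" using h1 by (rule sym)
    also have "\<dots> = d0 (pcm_mult I (phi m0') (tclass I []))" unfolding that(3) by (rule refl)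
    also have "\<dots> = m0'" by (rule h2)
    finally show ?thesis .
  qed
  have RS: "mring \<Sigma>0 ((\<Sigma>0 \<times> \<Sigma>0) \<inter> I) = mring \<Sigma>0 I0" unfolding I0_def by (rule refl)
  have rsupp: "m0 \<in> M0" if "r \<in> mring \<Sigma>0 I0" "r m0 \<noteq> 0" for r m0
    using that unfolding mring_def M0_def by blast
  have xsupp: "m \<in> M" if "x \<in> mring \<Sigma> I" "x m \<noteq> 0" for x m
    using that unfolding mring_def M_def by blast
  have map1: "mr_map I r (phi m0) = r m0" if r: "r \<in> mring \<Sigma>0 I0" and m0: "m0 \<in> M0" for r m0
  proof -
    have "{m0'. r m0' \<noteq> 0 \<and> tclass I (rep m0') = phi m0} = (if r m0 = 0 then {} else {m0})"
      using rsupp[OF r] inj_phi m0 unfolding phi_def by auto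
    then show ?thesis unfolding mr_map_def by (simp add: phi_def)
  qed
  have map0: "\<exists>m0\<in>M0. m1 = phi m0" if r: "r \<in> mring \<Sigma>0 I0" and nz: "mr_map I r m1 \<noteq> 0" for r m1
  proof -
    have "{m0. r m0 \<noteq> 0 \<and> tclass I (rep m0) = m1} \<noteq> {}"
    proof
      assume "{m0. r m0 \<noteq> 0 \<and> tclass I (rep m0) = m1} = {}"
      then have "mr_map I r m1 = 0" unfolding mr_map_def by (simp only: sum.empty)
      then show False using nz by simp
    qed
    then show ?thesis using rsupp[OF r] unfolding phi_def by auto
  qed
  have act: "sub_act I r (dl t) m = (if m \<in> M \<and> d1 m = t then r (d0 m) else 0)"
    if r: "r \<in> mring \<Sigma>0 I0" and t: "t \<in> T" for r t m
  proof -
    define f where "f = mr_map I r"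
    define P where "P = {(m1,m2). f m1 \<noteq> 0 \<and> dl t m2 \<noteq> 0 \<and> pcm_mult I m1 m2 = m}"
    have e: "sub_act I r (dl t) m = (\<Sum>(m1,m2)\<in>P. f m1 * dl t m2)"
      unfolding sub_act_def mr_mult_def P_def f_def by simp
    show ?thesis
    proof (cases "m \<in> M \<and> d1 m = t \<and> r (d0 m) \<noteq> 0")
      case True
      have B': "d0 m \<in> M0" "pcm_mult I (phi (d0 m)) t = m" using B True by auto
      have "P = {(phi (d0 m), t)}"
      proof
        show "{(phi (d0 m), t)} \<subseteq> P"
          unfolding P_def f_def using map1[OF r B'(1)] True B'(2) by (auto simp: dl_def)
        show "P \<subseteq> {(phi (d0 m), t)}"
        proof
          fix p assume "p \<in> P"
          then obtain m1 m2 where p: "p = (m1,m2)" "f m1 \<noteq> 0" "dl t m2 \<noteq> 0" "pcm_mult I m1 m2 = m"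
            unfolding P_def by auto
          have m2: "m2 = t" using p(3) unfolding dl_def by (auto split: if_splits)
          obtain m0 where m0: "m0 \<in> M0" "m1 = phi m0" using map0[OF r] p(2) unfolding f_def by blast
          have "d0 m = m0" using A[OF m0(1) t] p(4) m2 m0(2) by auto
          then show "p \<in> {(phi (d0 m), t)}" using p(1) m2 m0(2) by auto
        qed
      qed
      then show ?thesis using e True map1[OF r B'(1)] unfolding f_def by (simp add: dl_def)
    next
      case False
      have "P = {}"
      proof (rule ccontr)
        assume "P \<noteq> {}"
        then obtain m1 m2 where p: "f m1 \<noteq> 0" "dl t m2 \<noteq> 0" "pcm_mult I m1 m2 = m"
          unfolding P_def by auto
        have m2: "m2 = t" using p(2) unfolding dl_def by (auto split: if_splits)
        obtain m0 where m0: "m0 \<in> M0" "m1 = phi m0" using map0[OF r] p(1) unfolding f_def by blast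
        have "m \<in> M" "d0 m = m0" "d1 m = t" using A[OF m0(1) t] p(3) m2 m0(2) by auto
        moreover have "r m0 \<noteq> 0" using p(1) map1[OF r m0(1)] m0(2) unfolding f_def by simp
        ultimately show False using False by auto
      qed
      then show ?thesis using e False by auto
    qed
  qed
  have sumchar: "(\<lambda>m. \<Sum>b \<in> {b. c' b \<noteq> (\<lambda>_. 0)}. sub_act I (c' b) b m)
      = (\<lambda>m. if m \<in> M then c' (dl (d1 m)) (d0 m) else 0)"
    if c1: "\<forall>b. c' b \<in> mring \<Sigma>0 I0" and c2: "\<forall>b. b \<notin> dl ` T \<longrightarrow> c' b = (\<lambda>_. 0)"
      and c3: "finite {b. c' b \<noteq> (\<lambda>_. 0)}" for c'
  proof
    fix m
    define F where "F = {b. c' b \<noteq> (\<lambda>_. 0)}"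
    have trm: "sub_act I (c' b) b m = (if m \<in> M \<and> dl (d1 m) = b then c' b (d0 m) else 0)" if "b \<in> F" for b
    proof -
      have "b \<in> dl ` T"
      proof (rule ccontr)
        assume "b \<notin> dl ` T"
        then have "c' b = (\<lambda>_. 0)" using c2 by simp
        then show False using that unfolding F_def by simp
      qed
      then obtain t where t2: "b = dl t" and t1: "t \<in> T" by (rule imageE)
      note t = t1 t2
      have "sub_act I (c' (dl t)) (dl t) m = (if m \<in> M \<and> d1 m = t then c' (dl t) (d0 m) else 0)"
        by (rule act[OF spec[OF c1] t(1)])
      then show ?thesis unfolding t(2) inj_eq[OF inj_dl] .
    qed
    show "(\<Sum>b \<in> {b. c' b \<noteq> (\<lambda>_. 0)}. sub_act I (c' b) b m) = (if m \<in> M then c' (dl (d1 m)) (d0 m) else 0)"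
    proof (cases "m \<in> M")
      case True
      have "(\<Sum>b\<in>F. sub_act I (c' b) b m) = (\<Sum>b\<in>F. if dl (d1 m) = b then c' b (d0 m) else 0)"
        using trm True by (intro sum.cong) auto
      also have "\<dots> = (if dl (d1 m) \<in> F then c' (dl (d1 m)) (d0 m) else 0)"
        using c3 unfolding F_def by (rule sum.delta')
      also have "\<dots> = c' (dl (d1 m)) (d0 m)"
      proof (cases "dl (d1 m) \<in> F")
        case False
        then have "c' (dl (d1 m)) = (\<lambda>_. 0)" unfolding F_def by simp
        then show ?thesis using False by simp
      qed simp
      finally show ?thesis using True unfolding F_def by simp
    next
      case False
      have "(\<Sum>b\<in>F. sub_act I (c' b) b m) = (\<Sum>b\<in>F. 0)"
        using trm False by (intro sum.cong) auto
      then show ?thesis using False unfolding F_def by simp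
    qed
  qed
  show ?thesis
    unfolding free_left_module_def RS
  proof (intro exI[of _ "dl ` T"] conjI ballI)
    show "dl ` T \<subseteq> mring \<Sigma> I"
    proof
      fix b assume "b \<in> dl ` T"
      then obtain t where b: "b = dl t" and t: "t \<in> T" by (rule imageE)
      have "{m. b m \<noteq> 0} = {t}" unfolding b dl_def by auto
      moreover have "t \<in> pcm \<Sigma> I" using t TM unfolding M_def by blast
      ultimately show "b \<in> mring \<Sigma> I" unfolding mring_def by simp
    qed
  next
    fix x assume x: "x \<in> mring \<Sigma> I"
    have xfin: "finite {m. x m \<noteq> 0}" using x unfolding mring_def by blast
    define c where "c = (\<lambda>b. if b \<in> dl ` T then (\<lambda>m0. if m0 \<in> M0 then x (pcm_mult I (phi m0) (inv dl b)) else 0) else (\<lambda>_. 0::int))"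
    have cdl: "c (dl t) = (\<lambda>m0. if m0 \<in> M0 then x (pcm_mult I (phi m0) t) else 0)" if "t \<in> T" for t
      unfolding c_def inv_f_f[OF inj_dl] if_P[OF imageI[OF that, of dl]] by (rule refl)
    have c2: "\<forall>b. b \<notin> dl ` T \<longrightarrow> c b = (\<lambda>_. 0)" unfolding c_def by simp
    have c1: "\<forall>b. c b \<in> mring \<Sigma>0 I0"
    proof
      fix b show "c b \<in> mring \<Sigma>0 I0"
      proof (cases "b \<in> dl ` T")
        case True
        then obtain t where b: "b = dl t" and t: "t \<in> T" by (rule imageE)
        define g where "g = (\<lambda>m0. pcm_mult I (phi m0) t)"
        define S where "S = {m0. c b m0 \<noteq> 0}"
        have S: "S = {m0 \<in> M0. x (g m0) \<noteq> 0}" unfolding S_def b cdl[OF t] g_def by auto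
        have inj: "inj_on g S"
        proof (rule inj_onI)
          fix a a' assume "a \<in> S" "a' \<in> S" "g a = g a'"
          then have "a \<in> M0" "a' \<in> M0" "g a = g a'" unfolding S by auto
          then show "a = a'" using A[OF \<open>a \<in> M0\<close> t] A[OF \<open>a' \<in> M0\<close> t] unfolding g_def by metis
        qed
        have "g ` S \<subseteq> {m. x m \<noteq> 0}" unfolding S by auto
        then have "finite (g ` S)" using xfin finite_subset by blast
        then have "finite S" using inj finite_imageD by blast
        moreover have "S \<subseteq> pcm \<Sigma>0 I0" unfolding S M0_def by auto
        ultimately show ?thesis unfolding mring_def S_def by blast
      next
        case False then have "c b = (\<lambda>_. 0)" unfolding c_def by simp
        then show ?thesis unfolding mring_def by simp
      qed
    qed
    have c3: "finite {b. c b \<noteq> (\<lambda>_. 0)}"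
    proof (rule finite_subset)
      show "{b. c b \<noteq> (\<lambda>_. 0)} \<subseteq> (\<lambda>m. dl (d1 m)) ` {m. x m \<noteq> 0}"
      proof
        fix b assume "b \<in> {b. c b \<noteq> (\<lambda>_. 0)}"
        then have nz: "c b \<noteq> (\<lambda>_. 0)" by simp
        have "b \<in> dl ` T"
        proof (rule ccontr)
          assume "b \<notin> dl ` T"
          then have "c b = (\<lambda>_. 0)" using c2 by simp
          then show False using nz by simp
        qed
        then obtain t where b: "b = dl t" and t: "t \<in> T" by (rule imageE)
        have "\<exists>m0. c b m0 \<noteq> 0"
        proof (rule ccontr)
          assume "\<nexists>m0. c b m0 \<noteq> 0"
          then have "c b = (\<lambda>_. 0)" by (intro ext) simp
          then show False using nz by simp
        qed
        then obtain m0 where m0: "c b m0 \<noteq> 0" by blast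
        then have m0M: "m0 \<in> M0" and xm: "x (pcm_mult I (phi m0) t) \<noteq> 0"
          unfolding b cdl[OF t] by (auto split: if_splits)
        have "d1 (pcm_mult I (phi m0) t) = t" using A[OF m0M t] by blast
        then show "b \<in> (\<lambda>m. dl (d1 m)) ` {m. x m \<noteq> 0}"
          using xm b by (intro image_eqI[of _ _ "pcm_mult I (phi m0) t"]) auto
      qed
      show "finite ((\<lambda>m. dl (d1 m)) ` {m. x m \<noteq> 0})" using xfin by simp
    qed
    have xeq: "x = (\<lambda>m. if m \<in> M then c (dl (d1 m)) (d0 m) else 0)"
    proof
      fix m show "x m = (if m \<in> M then c (dl (d1 m)) (d0 m) else 0)"
      proof (cases "m \<in> M")
        case True
        note Bm = B[OF True]
        have "c (dl (d1 m)) (d0 m) = x (pcm_mult I (phi (d0 m)) (d1 m))"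
          using cdl[of "d1 m"] Bm by simp
        also have "\<dots> = x m" using Bm by simp
        finally show ?thesis using True by simp
      next
        case False then show ?thesis using xsupp[OF x, of m] by auto
      qed
    qed
    show "\<exists>!c. (\<forall>b. c b \<in> mring \<Sigma>0 I0) \<and> (\<forall>b. b \<notin> dl ` T \<longrightarrow> c b = (\<lambda>_. 0)) \<and>
        finite {b. c b \<noteq> (\<lambda>_. 0)} \<and> x = (\<lambda>m. \<Sum>b \<in> {b. c b \<noteq> (\<lambda>_. 0)}. sub_act I (c b) b m)"
    proof (rule ex1I[of _ c])
      show "(\<forall>b. c b \<in> mring \<Sigma>0 I0) \<and> (\<forall>b. b \<notin> dl ` T \<longrightarrow> c b = (\<lambda>_. 0)) \<and>
        finite {b. c b \<noteq> (\<lambda>_. 0)} \<and> x = (\<lambda>m. \<Sum>b \<in> {b. c b \<noteq> (\<lambda>_. 0)}. sub_act I (c b) b m)"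
        using c1 c2 c3 sumchar[OF c1 c2 c3] xeq by simp
    next
      fix c' assume h: "(\<forall>b. c' b \<in> mring \<Sigma>0 I0) \<and> (\<forall>b. b \<notin> dl ` T \<longrightarrow> c' b = (\<lambda>_. 0)) \<and>
        finite {b. c' b \<noteq> (\<lambda>_. 0)} \<and> x = (\<lambda>m. \<Sum>b \<in> {b. c' b \<noteq> (\<lambda>_. 0)}. sub_act I (c' b) b m)"
      then have h1: "\<forall>b. c' b \<in> mring \<Sigma>0 I0" and h2: "\<forall>b. b \<notin> dl ` T \<longrightarrow> c' b = (\<lambda>_. 0)"
        and h3: "finite {b. c' b \<noteq> (\<lambda>_. 0)}"
        and h4: "x = (\<lambda>m. \<Sum>b \<in> {b. c' b \<noteq> (\<lambda>_. 0)}. sub_act I (c' b) b m)" by blast+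
      have hx: "x = (\<lambda>m. if m \<in> M then c' (dl (d1 m)) (d0 m) else 0)"
        using h4 sumchar[OF h1 h2 h3] by simp
      show "c' = c"
      proof
        fix b show "c' b = c b"
        proof (cases "b \<in> dl ` T")
          case True
          then obtain t where b: "b = dl t" and t: "t \<in> T" by (rule imageE)
          show ?thesis
          proof
            fix m0 show "c' b m0 = c b m0"
            proof (cases "m0 \<in> M0")
              case True
              define g where "g = pcm_mult I (phi m0) t"
              have Ag: "g \<in> M" "d0 g = m0" "d1 g = t" using A[OF True t] unfolding g_def by auto
              have "x g = c' (dl t) m0" using fun_cong[OF hx, of g] Ag by simp
              then show ?thesis using cdl[OF t] True b unfolding g_def by simp
            next
              case False
              have "c' b m0 = 0" using rsupp[OF spec[OF h1, of b], of m0] False by blast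
              then show ?thesis using cdl[OF t] False b by simp
            qed
          qed
        next
          case False then show ?thesis using h2 c2 by simp
        qed
      qed
    qed
  qed
qed

end
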